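(* For every institution $s$, the aggregate choice rule $\mathcal{C}^h_s$ is fair: for every $Y\subseteq X$ and every $x\in Y_s$ with $\mathbf{i}(x)\notin\mathbf{i}(\mathcal{C}^h_s(Y))$, every $y\in\mathcal{C}^h_s(Y)$ satisfies at least one of: (1) $\mathbf{i}(y)\succ_{s}\mathbf{i}(x)$; (2) $\mathbf{t}(x)\neq\mathbf{t}(y)$; (3) $\rho(\mathbf{i}(y))\setminus\rho(\mathbf{i}(x))\neq\emptyset$.
   Context: Model. $I$ finite set of individuals, $S$ finite set of institutions. Reserve categories $R=\{SC,ST,OBC,EWS\}$, position types $V=\{o\}\cup R$ ($o$ = open category). Institution $s$ has $q_s^r$ positions reserved for $r\in R$ and $q_s^o$ open positions. Individual $i$ has vertical membership $t(i)\in R\cup\{g\}$ ($g$ = general). Institution $s$ has a strict merit ranking $\succ_s$ of $I$. Contracts $X$: triples $(i,s,v)$ with $v=o$, or $v=t(i)$ if $t(i)\in R$; $\mathbf{i}(x),\mathbf{s}(x),\mathbf{t}(x)$ denote individual, institution, category; $Y_s=\{x\in Y:\mathbf{s}(x)=s\}$, $\mathbf{i}(Y)=\{\mathbf{i}(x):x\in Y\}$. $H=\{h_1,\dots,h_L\}$ horizontal types, $\rho(i)\subseteq H$ types of $i$, $\rho^{-1}(h)=\{i:h\in\rho(i)\}$; hierarchical: if $\rho^{-1}(h)\cap\rho^{-1}(h')\neq\emptyset$ then one of $\rho^{-1}(h),\rho^{-1}(h')$ is a strict subset of the other ($h$ contains $h'$ if $\rho^{-1}(h')\subsetneq\rho^{-1}(h)$).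 For each $s$ and $v\in V$, $\kappa^s_v=(\kappa^s_{v,j})_{j}\in\mathbb{Z}_+^L$ are horizontal reservations within category $v$ at $s$; a chosen individual counts against every type she has. Hierarchical choice rule $C^h(A,\kappa,\rho)$ with capacity $q$ and ranking $\succ$: Step 1: let $H^1$ be the types containing no other type. If no individual in $A$ has a horizontal type, choose the $\min(q,|A|)$ highest-ranked and stop. Otherwise for each $h_j\in H^1$ (in a fixed order, not exceeding remaining positions) choose all not-yet-chosen type-$h_j$ individuals of $A$ if at most $\kappa_j$, else the $\kappa_j$ highest-ranked; reduce remaining positions and the reservation of each type containing $h_j$ by the number chosen (floored at 0); remove $h_j$. Step $n\ge2$: stop if no positions or individuals remain; if no type remains, fill remaining positions with the highest-ranked remaining individuals and stop; otherwise process the remaining types containing no other remaining type as in Step 1 with updated reservations. Output: all individuals chosen. Aggregate choice rule $\mathcal{C}^h_s$: given $Y\subseteq X$, categories are processed in the order $o,SC,ST,OBC,EWS$. For category $v$, let $A_v$ be the set of individuals who have a contract $(i,s,v)\in Y$ and who were not chosen by any earlier category; apply $C^h(A_v,\kappa^s_v,\rho)$ with capacity $q_s^v$ and ranking $\succ_s$, and select the contracts $(i,s,v)$ of the chosen individuals. $\mathcal{C}^h_s(Y)$ is the union of the selected contracts over all categories. *)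

theory Defs
  imports Main
begin

datatype rcat = SC | ST | OBC | EWS
datatype vmem = Reserved rcat | General        (* vertical membership t(i) in R \<union> {g} *)
datatype pos = Open | Res rcat                 (* position types V = {o} \<union> R *)

type_synonym ('i, 's) contract = "'i \<times> 's \<times> pos"

definition ind :: "('i, 's) contract \<Rightarrow> 'i" where "ind x = fst x"
definition inst :: "('i, 's) contract \<Rightarrow> 's" where "inst x = fst (snd x)"
definition cat :: "('i, 's) contract \<Rightarrow> pos" where "cat x = snd (snd x)"

definition contracts :: "'i set \<Rightarrow> 's set \<Rightarrow> ('i \<Rightarrow> vmem) \<Rightarrow> ('i, 's) contract set" where
  "contracts I S t = {(i, s, v). i \<in> I \<and> s \<in> S \<and>
      (v = Open \<or> (\<exists>r. v = Res r \<and> t i = Reserved r))}"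

text \<open>succ a b means a is ranked strictly higher than b; a strict total order on I.\<close>
definition strict_ranking :: "'i set \<Rightarrow> ('i \<Rightarrow> 'i \<Rightarrow> bool) \<Rightarrow> bool" where
  "strict_ranking I succ \<longleftrightarrow>
     (\<forall>a\<in>I. \<not> succ a a) \<and>
     (\<forall>a\<in>I. \<forall>b\<in>I. \<forall>c\<in>I. succ a b \<longrightarrow> succ b c \<longrightarrow> succ a c) \<and>
     (\<forall>a\<in>I. \<forall>b\<in>I. a \<noteq> b \<longrightarrow> succ a b \<or> succ b a)"

definition best :: "('i \<Rightarrow> 'i \<Rightarrow> bool) \<Rightarrow> 'i set \<Rightarrow> 'i" where
  "best succ A = (THE m. m \<in> A \<and> (\<forall>a\<in>A. a \<noteq> m \<longrightarrow> succ m a))"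

fun top :: "('i \<Rightarrow> 'i \<Rightarrow> bool) \<Rightarrow> nat \<Rightarrow> 'i set \<Rightarrow> 'i set" where
  "top succ 0 A = {}"
| "top succ (Suc n) A =
     (if A = {} then {} else insert (best succ A) (top succ n (A - {best succ A})))"

definition type_pre :: "'i set \<Rightarrow> ('i \<Rightarrow> 'h set) \<Rightarrow> 'h \<Rightarrow> 'i set" where
  "type_pre I \<rho> h = {i \<in> I. h \<in> \<rho> i}"

definition contains :: "'i set \<Rightarrow> ('i \<Rightarrow> 'h set) \<Rightarrow> 'h \<Rightarrow> 'h \<Rightarrow> bool" where
  "contains I \<rho> h h' \<longleftrightarrow> type_pre I \<rho> h' \<subset> type_pre I \<rho> h"

definition hierarchical :: "'i set \<Rightarrow> ('i \<Rightarrow> 'h set) \<Rightarrow> 'h set \<Rightarrow> bool" where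
  "hierarchical I \<rho> H \<longleftrightarrow>
     (\<forall>h\<in>H. \<forall>h'\<in>H. h \<noteq> h' \<longrightarrow> type_pre I \<rho> h \<inter> type_pre I \<rho> h' \<noteq> {} \<longrightarrow>
        type_pre I \<rho> h \<subset> type_pre I \<rho> h' \<or> type_pre I \<rho> h' \<subset> type_pre I \<rho> h)"

text \<open>State: (chosen individuals, remaining positions, current reservations).
  Processing one type h: choose the (at most k h, at most remaining positions)
  highest-ranked not-yet-chosen type-h individuals; update positions and the
  reservations of every type containing h (truncated subtraction = floor at 0).\<close>
definition process_type ::
  "'i set \<Rightarrow> ('i \<Rightarrow> 'h set) \<Rightarrow> ('i \<Rightarrow> 'i \<Rightarrow> bool) \<Rightarrow> 'i set \<Rightarrow> 'h
   \<Rightarrow> 'i set \<times> nat \<times> ('h \<Rightarrow> nat) \<Rightarrow> 'i set \<times> nat \<times> ('h \<Rightarrow> nat)" where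
  "process_type I \<rho> succ A h st = (case st of (C, q, k) \<Rightarrow>
     (let B = top succ (min (k h) q) {a \<in> A - C. h \<in> \<rho> a}; c = card B
      in (C \<union> B, q - c, \<lambda>h'. if contains I \<rho> h' h then k h' - c else k h')))"

definition level :: "'i set \<Rightarrow> ('i \<Rightarrow> 'h set) \<Rightarrow> 'h set \<Rightarrow> 'h set" where
  "level I \<rho> R = {h \<in> R. \<not> (\<exists>h'\<in>R. contains I \<rho> h h')}"

definition hier_step ::
  "'i set \<Rightarrow> ('i \<Rightarrow> 'h set) \<Rightarrow> 'h list \<Rightarrow> ('i \<Rightarrow> 'i \<Rightarrow> bool) \<Rightarrow> 'i set
   \<Rightarrow> ('i set \<times> nat \<times> ('h \<Rightarrow> nat)) \<times> 'h set \<Rightarrow> ('i set \<times> nat \<times> ('h \<Rightarrow> nat)) \<times> 'h set" where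
  "hier_step I \<rho> hs succ A sr = (case sr of (st, R) \<Rightarrow>
     (let L = level I \<rho> R in (fold (process_type I \<rho> succ A) (filter (\<lambda>h. h \<in> L) hs) st, R - L)))"

text \<open>Steps n \<ge> 2 (with fuel; the fuel given below always suffices).\<close>
fun hier_loop ::
  "nat \<Rightarrow> 'i set \<Rightarrow> ('i \<Rightarrow> 'h set) \<Rightarrow> 'h list \<Rightarrow> ('i \<Rightarrow> 'i \<Rightarrow> bool) \<Rightarrow> 'i set
   \<Rightarrow> ('i set \<times> nat \<times> ('h \<Rightarrow> nat)) \<times> 'h set \<Rightarrow> 'i set" where
  "hier_loop 0 I \<rho> hs succ A sr = fst (fst sr)"
| "hier_loop (Suc n) I \<rho> hs succ A sr = (case sr of ((C, q, k), R) \<Rightarrow>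
     (if q = 0 \<or> A - C = {} then C
      else if R = {} then C \<union> top succ q (A - C)
      else hier_loop n I \<rho> hs succ A (hier_step I \<rho> hs succ A sr)))"

text \<open>C^h(A, kappa, rho) with capacity q and ranking succ; H = set hs with fixed order hs.\<close>
definition choice_h ::
  "'i set \<Rightarrow> ('i \<Rightarrow> 'h set) \<Rightarrow> 'h list \<Rightarrow> ('i \<Rightarrow> 'i \<Rightarrow> bool) \<Rightarrow> nat \<Rightarrow> ('h \<Rightarrow> nat)
   \<Rightarrow> 'i set \<Rightarrow> 'i set" where
  "choice_h I \<rho> hs succ q \<kappa> A =
     (if \<forall>a\<in>A. \<rho> a = {} then top succ q A
      else hier_loop (Suc (length hs)) I \<rho> hs succ A
             (hier_step I \<rho> hs succ A (({}, q, \<kappa>), set hs)))"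

definition cat_order :: "pos list" where
  "cat_order = [Open, Res SC, Res ST, Res OBC, Res EWS]"

definition agg_step ::
  "'i set \<Rightarrow> ('i \<Rightarrow> 'h set) \<Rightarrow> 'h list \<Rightarrow> ('s \<Rightarrow> 'i \<Rightarrow> 'i \<Rightarrow> bool) \<Rightarrow> ('s \<Rightarrow> pos \<Rightarrow> nat)
   \<Rightarrow> ('s \<Rightarrow> pos \<Rightarrow> 'h \<Rightarrow> nat) \<Rightarrow> 's \<Rightarrow> ('i, 's) contract set \<Rightarrow> pos
   \<Rightarrow> 'i set \<times> ('i, 's) contract set \<Rightarrow> 'i set \<times> ('i, 's) contract set" where
  "agg_step I \<rho> hs succ q \<kappa> s Y v DZ = (case DZ of (D, Z) \<Rightarrow>
     (let A = {i. (i, s, v) \<in> Y} - D;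
          Ch = choice_h I \<rho> hs (succ s) (q s v) (\<kappa> s v) A
      in (D \<union> Ch, Z \<union> {(i, s, v) | i. i \<in> Ch})))"

definition agg_choice ::
  "'i set \<Rightarrow> ('i \<Rightarrow> 'h set) \<Rightarrow> 'h list \<Rightarrow> ('s \<Rightarrow> 'i \<Rightarrow> 'i \<Rightarrow> bool) \<Rightarrow> ('s \<Rightarrow> pos \<Rightarrow> nat)
   \<Rightarrow> ('s \<Rightarrow> pos \<Rightarrow> 'h \<Rightarrow> nat) \<Rightarrow> 's \<Rightarrow> ('i, 's) contract set \<Rightarrow> ('i, 's) contract set" where
  "agg_choice I \<rho> hs succ q \<kappa> s Y =
     snd (fold (agg_step I \<rho> hs succ q \<kappa> s Y) cat_order ({}, {}))"

end

theory Submission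
  imports Defs
begin

lemma sr_trans: "strict_ranking I succ \<Longrightarrow> a \<in> I \<Longrightarrow> b \<in> I \<Longrightarrow> c \<in> I \<Longrightarrow> succ a b \<Longrightarrow> succ b c \<Longrightarrow> succ a c"
  unfolding strict_ranking_def by blast

lemma sr_irrefl: "strict_ranking I succ \<Longrightarrow> a \<in> I \<Longrightarrow> \<not> succ a a"
  unfolding strict_ranking_def by blast

lemma sr_total: "strict_ranking I succ \<Longrightarrow> a \<in> I \<Longrightarrow> b \<in> I \<Longrightarrow> a \<noteq> b \<Longrightarrow> \<not> succ a b \<Longrightarrow> succ b a"
  unfolding strict_ranking_def by blast

lemma best_ex:
  assumes "finite X" "X \<noteq> {}" "X \<subseteq> I" "strict_ranking I succ"
  shows "\<exists>m. m \<in> X \<and> (\<forall>a\<in>X. a \<noteq> m \<longrightarrow> succ m a)"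
  using assms(1,2,3)
proof (induction X rule: finite_ne_induct)
  case (singleton x) then show ?case by auto
next
  case (insert x F)
  then obtain m where m: "m \<in> F" "\<forall>a\<in>F. a \<noteq> m \<longrightarrow> succ m a" by auto
  have xI: "x \<in> I" and FI: "F \<subseteq> I" using insert by auto
  show ?case
  proof (cases "succ x m")
    case xm: True
    have "\<forall>a\<in>insert x F. a \<noteq> x \<longrightarrow> succ x a"
    proof (intro ballI impI)
      fix a assume a: "a \<in> insert x F" "a \<noteq> x"
      then have aF: "a \<in> F" by auto
      show "succ x a"
      proof (cases "a = m")
        case True then show ?thesis using xm by auto
      next
        case False
        then have "succ m a" using aF m by auto
        moreover have "a \<in> I" "m \<in> I" using aF m(1) FI by auto
        ultimately show ?thesis using xm sr_trans[OF assms(4) xI] by blast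
      qed
    qed
    then show ?thesis by blast
  next
    case False
    have "x \<noteq> m" using insert m by auto
    moreover have "m \<in> I" using m(1) FI by auto
    ultimately have "succ m x" using False sr_total[OF assms(4) xI] by blast
    then show ?thesis using m by (intro exI[of _ m]) auto
  qed
qed

lemma best_prop:
  assumes "finite X" "X \<noteq> {}" "X \<subseteq> I" "strict_ranking I succ"
  shows "best succ X \<in> X \<and> (\<forall>a\<in>X. a \<noteq> best succ X \<longrightarrow> succ (best succ X) a)"
proof -
  obtain m where m: "m \<in> X" "\<forall>a\<in>X. a \<noteq> m \<longrightarrow> succ m a" using best_ex[OF assms] by blast
  have uniq: "m' = m" if "m' \<in> X" "\<forall>a\<in>X. a \<noteq> m' \<longrightarrow> succ m' a" for m'
  proof (rule ccontr)
    assume "m' \<noteq> m"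
    then have "succ m m'" "succ m' m" using m that by simp_all
    moreover have "m \<in> I" "m' \<in> I" using assms(3) m(1) that(1) by auto
    ultimately have "succ m m" using sr_trans[OF assms(4)] by blast
    then show False using sr_irrefl[OF assms(4) \<open>m \<in> I\<close>] by blast
  qed
  have "best succ X = m" unfolding best_def
  proof (rule the_equality)
    show "m \<in> X \<and> (\<forall>a\<in>X. a \<noteq> m \<longrightarrow> succ m a)" using m by blast
    show "m' = m" if "m' \<in> X \<and> (\<forall>a\<in>X. a \<noteq> m' \<longrightarrow> succ m' a)" for m'
      using uniq that by blast
  qed
  then show ?thesis using m by simp
qed

lemma top_fair:
  assumes "finite X" "X \<subseteq> I" "strict_ranking I succ"
  shows "top succ n X \<subseteq> X \<and> (\<forall>j\<in>top succ n X. \<forall>i\<in>X - top succ n X. succ j i)"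
  using assms(1,2)
proof (induction n arbitrary: X)
  case 0 then show ?case by simp
next
  case (Suc n)
  show ?case
  proof (cases "X = {}")
    case True then show ?thesis by simp
  next
    case False
    let ?b = "best succ X"
    have b: "?b \<in> X" "\<forall>a\<in>X. a \<noteq> ?b \<longrightarrow> succ ?b a"
      using best_prop[OF Suc.prems(1) False Suc.prems(2) assms(3)] by simp_all
    have IH: "top succ n (X - {?b}) \<subseteq> X - {?b} \<and>
      (\<forall>j\<in>top succ n (X - {?b}). \<forall>i\<in>(X - {?b}) - top succ n (X - {?b}). succ j i)"
    proof (rule Suc.IH)
      show "finite (X - {?b})" using Suc.prems(1) by (rule finite_Diff)
      show "X - {?b} \<subseteq> I" using Suc.prems(2) by blast
    qed
    let ?T = "top succ n (X - {?b})"
    have eq: "top succ (Suc n) X = insert ?b ?T" using False by simp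
    have 1: "insert ?b ?T \<subseteq> X" using IH b(1) by blast
    have 2: "\<forall>j\<in>insert ?b ?T. \<forall>i\<in>X - insert ?b ?T. succ j i"
    proof (intro ballI)
      fix j i assume j: "j \<in> insert ?b ?T" and i: "i \<in> X - insert ?b ?T"
      show "succ j i"
      proof (cases "j = ?b")
        case True then show ?thesis using b(2) i by blast
      next
        case False
        then have "j \<in> ?T" using j by blast
        moreover have "i \<in> (X - {?b}) - ?T" using i by blast
        ultimately show ?thesis using IH by (meson)
      qed
    qed
    show ?thesis unfolding eq using 1 2 by blast
  qed
qed

definition fairset :: "('i \<Rightarrow> 'h set) \<Rightarrow> ('i \<Rightarrow> 'i \<Rightarrow> bool) \<Rightarrow> 'i set \<Rightarrow> 'i set \<Rightarrow> bool" where
  "fairset \<rho> succ A C = (\<forall>j\<in>C. \<forall>i\<in>A - C. \<rho> j \<subseteq> \<rho> i \<longrightarrow> succ j i)"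

lemma fairset_top:
  assumes "finite A" "A \<subseteq> I" "strict_ranking I succ" "fairset \<rho> succ A C"
  shows "fairset \<rho> succ A (C \<union> top succ n (A - C))"
proof -
  have "finite (A - C)" "A - C \<subseteq> I" using assms by auto
  from top_fair[OF this assms(3), of n] assms(4) show ?thesis
    unfolding fairset_def by blast
qed

lemma fairset_process:
  assumes "finite A" "A \<subseteq> I" "strict_ranking I succ" "fairset \<rho> succ A (fst st)"
  shows "fairset \<rho> succ A (fst (process_type I \<rho> succ A h st))"
proof -
  obtain C q k where st: "st = (C, q, k)" by (cases st) auto
  let ?X = "{a \<in> A - C. h \<in> \<rho> a}"
  let ?B = "top succ (min (k h) q) ?X"
  have X1: "finite ?X" using assms(1) by (rule finite_subset[rotated]) blast
  have X2: "?X \<subseteq> I" using assms(2) by blast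
  have T: "?B \<subseteq> ?X" "\<forall>j\<in>?B. \<forall>i\<in>?X - ?B. succ j i"
    using top_fair[OF X1 X2 assms(3), of "min (k h) q"] by simp_all
  have "fairset \<rho> succ A (C \<union> ?B)"
    unfolding fairset_def
  proof (intro ballI impI)
    fix j i assume j: "j \<in> C \<union> ?B" and i: "i \<in> A - (C \<union> ?B)" and r: "\<rho> j \<subseteq> \<rho> i"
    show "succ j i"
    proof (cases "j \<in> C")
      case True
      have "fairset \<rho> succ A C" using assms(4) st by simp
      moreover have "i \<in> A - C" using i by blast
      ultimately show ?thesis using True r unfolding fairset_def by blast
    next
      case False
      then have jB: "j \<in> ?B" using j by blast
      then have "j \<in> ?X" using T(1) by blast
      then have "h \<in> \<rho> j" by blast
      then have "i \<in> ?X - ?B" using i r by blast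
      then show ?thesis using T(2) jB by blast
    qed
  qed
  moreover have "fst (process_type I \<rho> succ A h st) = C \<union> ?B"
    unfolding st process_type_def Let_def by simp
  ultimately show ?thesis by simp
qed

lemma fairset_fold:
  assumes "finite A" "A \<subseteq> I" "strict_ranking I succ" "fairset \<rho> succ A (fst st)"
  shows "fairset \<rho> succ A (fst (fold (process_type I \<rho> succ A) l st))"
  using assms(4)
proof (induction l arbitrary: st)
  case Nil then show ?case by simp
next
  case (Cons h l)
  show ?case using Cons.IH[OF fairset_process[OF assms(1-3) Cons.prems]] by simp
qed

lemma fairset_step:
  assumes "finite A" "A \<subseteq> I" "strict_ranking I succ" "fairset \<rho> succ A (fst (fst sr))"
  shows "fairset \<rho> succ A (fst (fst (hier_step I \<rho> hs succ A sr)))"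
proof -
  obtain st R where sr: "sr = (st, R)" by (cases sr) auto
  show ?thesis using fairset_fold[OF assms(1-3)] assms(4) sr
    by (simp add: hier_step_def Let_def)
qed

lemma fairset_loop:
  assumes "finite A" "A \<subseteq> I" "strict_ranking I succ" "fairset \<rho> succ A (fst (fst sr))"
  shows "fairset \<rho> succ A (hier_loop n I \<rho> hs succ A sr)"
  using assms(4)
proof (induction n arbitrary: sr)
  case 0 then show ?case by simp
next
  case (Suc n)
  obtain C q k R where sr: "sr = ((C, q, k), R)" by (cases sr) auto
  have C: "fairset \<rho> succ A C" using Suc.prems sr by simp
  have eq: "hier_loop (Suc n) I \<rho> hs succ A sr = (if q = 0 \<or> A - C = {} then C
      else if R = {} then C \<union> top succ q (A - C)
      else hier_loop n I \<rho> hs succ A (hier_step I \<rho> hs succ A sr))"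
    using sr by simp
  have 1: "fairset \<rho> succ A (C \<union> top succ q (A - C))" by (rule fairset_top[OF assms(1-3) C])
  have 2: "fairset \<rho> succ A (hier_loop n I \<rho> hs succ A (hier_step I \<rho> hs succ A sr))"
    by (rule Suc.IH[OF fairset_step[OF assms(1-3) Suc.prems]])
  show ?case unfolding eq using C 1 2 by presburger
qed

lemma choice_fair:
  assumes "finite A" "A \<subseteq> I" "strict_ranking I succ"
  shows "fairset \<rho> succ A (choice_h I \<rho> hs succ q \<kappa> A)"
proof -
  have e: "fairset \<rho> succ A {}" by (simp add: fairset_def)
  have "fairset \<rho> succ A (top succ q A)" using fairset_top[OF assms e, of q] by simp
  moreover have "fairset \<rho> succ A (hier_loop (Suc (length hs)) I \<rho> hs succ A
             (hier_step I \<rho> hs succ A (({}, q, \<kappa>), set hs)))"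
    by (rule fairset_loop[OF assms fairset_step[OF assms]]) (simp add: e)
  ultimately show ?thesis unfolding choice_h_def by simp
qed


definition aggQ :: "('i \<Rightarrow> 'h set) \<Rightarrow> ('i \<Rightarrow> 'i \<Rightarrow> bool) \<Rightarrow> 's \<Rightarrow> ('i, 's) contract set
   \<Rightarrow> 'i set \<times> ('i, 's) contract set \<Rightarrow> bool" where
  "aggQ \<rho> sc s Y DZ = (fst DZ = ind ` snd DZ \<and>
     (\<forall>y\<in>snd DZ. \<forall>i. (i, s, cat y) \<in> Y \<longrightarrow> i \<notin> fst DZ \<longrightarrow> \<rho> (ind y) \<subseteq> \<rho> i \<longrightarrow> sc (ind y) i))"

lemma agg_step_inv:
  assumes fin: "finite I" and SR: "strict_ranking I (succ s)"
    and Yc: "\<forall>i v. (i, s, v) \<in> Y \<longrightarrow> i \<in> I"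
    and Q: "aggQ \<rho> (succ s) s Y DZ"
  shows "aggQ \<rho> (succ s) s Y (agg_step I \<rho> hs succ q \<kappa> s Y v DZ)"
proof -
  obtain D Z where DZ: "DZ = (D, Z)" by (cases DZ) auto
  define A where "A = {i. (i, s, v) \<in> Y} - D"
  define Ch where "Ch = choice_h I \<rho> hs (succ s) (q s v) (\<kappa> s v) A"
  have AI: "A \<subseteq> I" using Yc unfolding A_def by blast
  have Afin: "finite A" using finite_subset[OF AI fin] .
  have F: "fairset \<rho> (succ s) A Ch" unfolding Ch_def by (rule choice_fair[OF Afin AI SR])
  have res: "agg_step I \<rho> hs succ q \<kappa> s Y v DZ = (D \<union> Ch, Z \<union> {(i, s, v) | i. i \<in> Ch})"
    unfolding DZ agg_step_def Let_def A_def Ch_def by simp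
  have QD: "D = ind ` Z" and QZ: "\<forall>y\<in>Z. \<forall>i. (i, s, cat y) \<in> Y \<longrightarrow> i \<notin> D \<longrightarrow> \<rho> (ind y) \<subseteq> \<rho> i \<longrightarrow> succ s (ind y) i"
    using Q unfolding DZ aggQ_def by auto
  have 1: "D \<union> Ch = ind ` (Z \<union> {(i, s, v) | i. i \<in> Ch})"
  proof -
    have e: "{(i, s, v) | i. i \<in> Ch} = (\<lambda>i. (i, s, v)) ` Ch" by blast
    have "ind ` {(i, s, v) | i. i \<in> Ch} = Ch" unfolding e image_image by (simp add: ind_def)
    then show ?thesis using QD by (simp add: image_Un)
  qed
  have 2: "\<forall>y\<in>Z \<union> {(i, s, v) | i. i \<in> Ch}. \<forall>i. (i, s, cat y) \<in> Y \<longrightarrow> i \<notin> D \<union> Ch \<longrightarrow> \<rho> (ind y) \<subseteq> \<rho> i \<longrightarrow> succ s (ind y) i"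
  proof (intro ballI allI impI)
    fix y i assume y: "y \<in> Z \<union> {(i, s, v) | i. i \<in> Ch}" and iY: "(i, s, cat y) \<in> Y"
      and iD: "i \<notin> D \<union> Ch" and r: "\<rho> (ind y) \<subseteq> \<rho> i"
    show "succ s (ind y) i"
    proof (cases "y \<in> Z")
      case True
      moreover have "i \<notin> D" using iD by blast
      ultimately show ?thesis using QZ iY r by (meson)
    next
      case False
      then obtain j where j: "y = (j, s, v)" "j \<in> Ch" using y by blast
      have "i \<in> A - Ch" using iY iD j unfolding A_def by (simp add: cat_def)
      moreover have "\<rho> j \<subseteq> \<rho> i" using r j(1) by (simp add: ind_def)
      ultimately have "succ s j i" using F j(2) unfolding fairset_def by blast
      then show ?thesis by (simp add: j(1) ind_def)
    qed
  qed
  show ?thesis unfolding res aggQ_def fst_conv snd_conv by (rule conjI[OF 1 2])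
qed

lemma agg_fold_inv:
  assumes fin: "finite I" and SR: "strict_ranking I (succ s)"
    and Yc: "\<forall>i v. (i, s, v) \<in> Y \<longrightarrow> i \<in> I"
  shows "aggQ \<rho> (succ s) s Y DZ \<Longrightarrow> aggQ \<rho> (succ s) s Y (fold (agg_step I \<rho> hs succ q \<kappa> s Y) l DZ)"
proof (induction l arbitrary: DZ)
  case Nil then show ?case by simp
next
  case (Cons v l)
  show ?case using Cons.IH[OF agg_step_inv[where succ=succ and s=s, OF fin SR Yc Cons.prems]] by simp
qed

theorem theorem2:
  fixes I :: "'i set" and S :: "'s set" and t :: "'i \<Rightarrow> vmem"
    and succ :: "'s \<Rightarrow> 'i \<Rightarrow> 'i \<Rightarrow> bool"
    and q :: "'s \<Rightarrow> pos \<Rightarrow> nat"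
    and hs :: "'h list" and \<rho> :: "'i \<Rightarrow> 'h set"
    and \<kappa> :: "'s \<Rightarrow> pos \<Rightarrow> 'h \<Rightarrow> nat"
  assumes "finite I" and "finite S" and "distinct hs"
    and "\<forall>s\<in>S. strict_ranking I (succ s)"
    and "\<forall>i\<in>I. \<rho> i \<subseteq> set hs"
    and "hierarchical I \<rho> (set hs)"
  shows "\<forall>s\<in>S. \<forall>Y. Y \<subseteq> contracts I S t \<longrightarrow>
           (\<forall>x\<in>Y. inst x = s \<longrightarrow> ind x \<notin> ind ` agg_choice I \<rho> hs succ q \<kappa> s Y \<longrightarrow>
              (\<forall>y\<in>agg_choice I \<rho> hs succ q \<kappa> s Y.
                 succ s (ind y) (ind x) \<or> cat x \<noteq> cat y \<or> \<rho> (ind y) - \<rho> (ind x) \<noteq> {}))"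
proof (intro ballI allI impI)
  fix s Y x y
  assume sS: "s \<in> S" and Y: "Y \<subseteq> contracts I S t" and xY: "x \<in> Y" and xs: "inst x = s"
    and xn: "ind x \<notin> ind ` agg_choice I \<rho> hs succ q \<kappa> s Y"
    and yC: "y \<in> agg_choice I \<rho> hs succ q \<kappa> s Y"
  have SR: "strict_ranking I (succ s)" using assms(4) sS by blast
  have Yc: "\<forall>i v. (i, s, v) \<in> Y \<longrightarrow> i \<in> I"
  proof (intro allI impI)
    fix i v assume "(i, s, v) \<in> Y"
    then have "(i, s, v) \<in> contracts I S t" using Y by (rule subsetD[rotated])
    then show "i \<in> I" by (simp add: contracts_def)
  qed
  have Q0: "aggQ \<rho> (succ s) s Y ({}, {})" unfolding aggQ_def by simp
  obtain D Z where DZ: "fold (agg_step I \<rho> hs succ q \<kappa> s Y) cat_order ({}, {}) = (D, Z)"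
    by (cases "fold (agg_step I \<rho> hs succ q \<kappa> s Y) cat_order ({}, {})") auto
  have Q: "aggQ \<rho> (succ s) s Y (D, Z)"
    using agg_fold_inv[where succ=succ and s=s and hs=hs and q=q and \<kappa>=\<kappa> and l=cat_order, OF assms(1) SR Yc Q0] DZ by simp
  have AC: "agg_choice I \<rho> hs succ q \<kappa> s Y = Z" unfolding agg_choice_def DZ by simp
  have QD: "D = ind ` Z" and QZ: "\<forall>y\<in>Z. \<forall>i. (i, s, cat y) \<in> Y \<longrightarrow> i \<notin> D \<longrightarrow> \<rho> (ind y) \<subseteq> \<rho> i \<longrightarrow> succ s (ind y) i"
    using Q unfolding aggQ_def by auto
  show "succ s (ind y) (ind x) \<or> cat x \<noteq> cat y \<or> \<rho> (ind y) - \<rho> (ind x) \<noteq> {}"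
  proof (rule ccontr)
    assume "\<not> ?thesis"
    then have c: "cat x = cat y" "\<rho> (ind y) \<subseteq> \<rho> (ind x)" "\<not> succ s (ind y) (ind x)" by auto
    have "x = (ind x, s, cat y)" using xs c(1) by (cases x) (simp add: ind_def inst_def cat_def)
    then have "(ind x, s, cat y) \<in> Y" using xY by simp
    moreover have "ind x \<notin> D" using xn AC QD by simp
    moreover have "y \<in> Z" using yC AC by simp
    ultimately have "succ s (ind y) (ind x)" using QZ c(2) by blast
    then show False using c(3) by simp
  qed
qed

end
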